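(* Fix $r\ge1$. For $K>r$ and $\theta>0$, let $V_1,\dots,V_{K-1}$ be independent with $V_i\sim\mathrm{Beta}(\frac{\theta}{K}+1,(K-i)\frac{\theta}{K})$, and set $Y_1^K=V_1$, $Y_i^K=(1-V_1)\cdots(1-V_{i-1})V_i$ for $2\le i\le K-1$. For fixed $K$, as $\theta\to\infty$ the laws of $(Y_1^K,\dots,Y_r^K)$ satisfy an LDP on $\Delta_r=\{(y_1,\dots,y_r): y_k\ge0,\ \sum_k y_k\le1\}$ with speed $\theta$ and some rate function $J_r^K$. Likewise, with $X_1=U_1$, $X_n=(1-U_1)\cdots(1-U_{n-1})U_n$ for i.i.d. $U_k\sim\mathrm{Beta}(1,\theta)$, the laws of $(X_1,\dots,X_r)$ satisfy an LDP on $\Delta_r$ with speed $\theta$ and rate function $S_r(x_1,\dots,x_r)=\log\frac{1}{1-\sum_{k=1}^r x_k}$ if $\sum_{k=1}^r x_k<1$ and $\infty$ otherwise. Then the rate functions $J_r^K$ do not converge to $S_r$ as $K\to\infty$; that is, there is a point $\mathbf x\in\Delta_r$ with $\lim_{K\to\infty}J_r^K(\mathbf x)\neq S_r(\mathbf x)$.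
   Context: $(Y_1^K,\dots,Y_{K-1}^K)$ is the size-biased sampling of a symmetric $\mathrm{Dirichlet}(\theta/K,\dots,\theta/K)$ distribution; $(X_1,X_2,\dots)$ is the GEM representation. An LDP with speed $\theta$ refers to normalization $\theta^{-1}\log$ as $\theta\to\infty$. *)

theory Defs
  imports "HOL-Probability.Probability"
begin

definition beta_measure :: "real \<Rightarrow> real \<Rightarrow> real measure" where
  "beta_measure a b = density lborel
     (\<lambda>x. ennreal (indicator {0<..<1} x * x powr (a - 1) * (1 - x) powr (b - 1)
                    / (Beta a b :: real)))"

text \<open>Points of R^r are represented as functions nat => real vanishing from index r on;
  coordinate k (0-based) is y_{k+1}.\<close>
definition simplex_r :: "nat \<Rightarrow> (nat \<Rightarrow> real) set" where
  "simplex_r r = {y. (\<forall>k<r. 0 \<le> y k) \<and> (\<Sum>k<r. y k) \<le> 1 \<and> (\<forall>k\<ge>r. y k = 0)}"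

definition eln :: "real \<Rightarrow> ereal" where
  "eln p = (if p \<le> 0 then -\<infinity> else ereal (ln p))"

definition rate_function :: "'a::topological_space set \<Rightarrow> ('a \<Rightarrow> ereal) \<Rightarrow> bool" where
  "rate_function X I \<longleftrightarrow> (\<forall>x\<in>X. 0 \<le> I x) \<and>
     (\<forall>c. closedin (top_of_set X) {x\<in>X. I x \<le> c})"

text \<open>Large deviation principle on X with speed theta -> infinity for the family of laws P
  (P theta A = probability that the random vector lies in A), rate function I.\<close>
definition LDP :: "(real \<Rightarrow> 'a::topological_space set \<Rightarrow> real) \<Rightarrow> 'a set \<Rightarrow> ('a \<Rightarrow> ereal) \<Rightarrow> bool" where
  "LDP P X I \<longleftrightarrow> rate_function X I \<and>
     (\<forall>F. closedin (top_of_set X) F \<longrightarrow>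
        Limsup at_top (\<lambda>\<theta>. eln (P \<theta> F) / ereal \<theta>) \<le> - (INF x\<in>F. I x)) \<and>
     (\<forall>G. openin (top_of_set X) G \<longrightarrow>
        - (INF x\<in>G. I x) \<le> Liminf at_top (\<lambda>\<theta>. eln (P \<theta> G) / ereal \<theta>))"

definition V_space :: "nat \<Rightarrow> real \<Rightarrow> (nat \<Rightarrow> real) measure" where
  "V_space K \<theta> = PiM {1..K-1}
      (\<lambda>i. beta_measure (\<theta> / real K + 1) (real (K - i) * \<theta> / real K))"

definition stick :: "(nat \<Rightarrow> real) \<Rightarrow> nat \<Rightarrow> real" where
  "stick V i = (\<Prod>j\<in>{1..<i}. (1 - V j)) * V i"

definition stick_vec :: "nat \<Rightarrow> (nat \<Rightarrow> real) \<Rightarrow> (nat \<Rightarrow> real)" where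
  "stick_vec r V = (\<lambda>k. if k < r then stick V (Suc k) else 0)"

definition lawY :: "nat \<Rightarrow> nat \<Rightarrow> real \<Rightarrow> (nat \<Rightarrow> real) set \<Rightarrow> real" where
  "lawY r K \<theta> A = measure (V_space K \<theta>) {v \<in> space (V_space K \<theta>). stick_vec r v \<in> A}"

definition S_rate :: "nat \<Rightarrow> (nat \<Rightarrow> real) \<Rightarrow> ereal" where
  "S_rate r x = (if (\<Sum>k<r. x k) < 1 then ereal (ln (1 / (1 - (\<Sum>k<r. x k)))) else \<infinity>)"

end

theory Submission
  imports Defs
begin


lemma Beta_pos: "a > 0 \<Longrightarrow> b > 0 \<Longrightarrow> Beta a b > (0::real)"
  by (simp add: Beta_def)

lemma beta_meas: "(\<lambda>x. ennreal (indicator {0<..<1} x * x powr (a - 1) * (1 - x) powr (b - 1)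
                    / (Beta a b :: real))) \<in> borel_measurable borel"
  by measurable

lemma beta_prob:
  assumes a: "a > 0" and b: "b > (0::real)"
  shows "prob_space (beta_measure a b)"
proof (rule prob_spaceI)
  let ?g = "\<lambda>x. x powr (a - 1) * (1 - x) powr (b - 1) / Beta a b"
  have B: "Beta a b > 0" using Beta_pos a b by simp
  have "((\<lambda>t. t powr (a - 1) * (1 - t) powr (b - 1)) has_integral Beta a b) {0<..<1}"
    using has_integral_Beta_real[OF a b] by (simp add: has_integral_Icc_iff_Ioo)
  then have hi: "(?g has_integral 1) {0<..<1}"
    using has_integral_divide[of _ "Beta a b" "{0<..<1}" "Beta a b"] B by simp
  have nn: "integral\<^sup>N lborel (\<lambda>x. indicator {0<..<1} x * ?g x) = 1"
    using nn_integral_has_integral_lebesgue[OF _ hi] B by simp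
  have "emeasure (beta_measure a b) UNIV = (\<integral>\<^sup>+ x. ennreal (indicator {0<..<1} x * x powr (a - 1) * (1 - x) powr (b - 1)
                    / (Beta a b :: real)) * indicator UNIV x \<partial>lborel)"
    unfolding beta_measure_def using beta_meas by (intro emeasure_density) auto
  also have "\<dots> = integral\<^sup>N lborel (\<lambda>x. indicator {0<..<1} x * ?g x)"
    by (intro nn_integral_cong) (simp add: mult.assoc)
  finally show "emeasure (beta_measure a b) (space (beta_measure a b)) = 1"
    using nn by (simp add: beta_measure_def)
qed

lemma Beta_lower:
  assumes a: "a \<ge> 1" and b: "b \<ge> (1::real)"
  shows "Beta a b \<ge> (1/4) * ((1/4) powr (a - 1) * (1/2) powr (b - 1))"
proof -
  let ?f = "\<lambda>t. t powr (a - 1) * (1 - t) powr (b - 1)"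
  let ?c = "(1/4) powr (a - 1) * (1/2) powr (b - 1)"
  have int: "?f integrable_on {0..1}" using integrable_Beta'[of a b] a b by simp
  have int2: "?f integrable_on {1/4..1/2}"
    by (rule integrable_on_subinterval[OF int]) auto
  have e: "Beta a b = integral {0..1} ?f" using has_integral_Beta_real[of a b] a b
    by (simp add: integral_unique)
  moreover have "integral {1/4..1/2} ?f \<le> integral {0..1} ?f"
    by (rule integral_subset_le) (use int int2 in \<open>auto intro!: mult_nonneg_nonneg\<close>)
  moreover have "integral {1/4..1/2::real} (\<lambda>_. ?c) \<le> integral {1/4..1/2} ?f"
  proof (rule integral_le)
    show "(\<lambda>_. ?c) integrable_on {1/4..1/2::real}" by (rule integrable_on_const) simp
    show "?f integrable_on {1/4..1/2}" by fact
    fix x :: real assume x: "x \<in> {1/4..1/2}"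
    show "?c \<le> ?f x"
      by (intro mult_mono powr_mono2 powr_ge_zero) (use x a b in auto)
  qed
  moreover have "integral {1/4..1/2::real} (\<lambda>_. ?c) = (1/4) * ?c" by simp
  ultimately show ?thesis by linarith
qed

lemma beta_tail:
  assumes a: "a \<ge> 1" and b: "b \<ge> (1::real)" and e: "0 < e" "e < 1"
  shows "measure (beta_measure a b) {..<e} \<le> e * (e powr (a - 1) / Beta a b)"
proof -
  interpret prob_space "beta_measure a b" using beta_prob a b by simp
  have B: "Beta a b > 0" using Beta_pos a b by simp
  let ?C = "e powr (a - 1) / Beta a b"
  have C0: "?C \<ge> 0" using B by simp
  have "emeasure (beta_measure a b) {..<e} = (\<integral>\<^sup>+ x. ennreal (indicator {0<..<1} x * x powr (a - 1) * (1 - x) powr (b - 1)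
                    / (Beta a b :: real)) * indicator {..<e} x \<partial>lborel)"
    unfolding beta_measure_def using beta_meas by (intro emeasure_density) auto
  also have "\<dots> \<le> (\<integral>\<^sup>+ x. ennreal ?C * indicator {0..e} x \<partial>lborel)"
  proof (intro nn_integral_mono)
    fix x :: real
    show "ennreal (indicator {0<..<1} x * x powr (a - 1) * (1 - x) powr (b - 1)
                    / (Beta a b :: real)) * indicator {..<e} x \<le> ennreal ?C * indicator {0..e} x"
    proof (cases "0 < x \<and> x < e")
      case True
      have "x powr (a - 1) * (1 - x) powr (b - 1) \<le> e powr (a - 1) * 1"
        using True a b e by (intro mult_mono powr_mono2 powr_le1) auto
      then have "x powr (a - 1) * (1 - x) powr (b - 1) / Beta a b \<le> ?C"
        using B by (simp add: divide_right_mono)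
      then show ?thesis using True e by (auto simp: indicator_def intro!: ennreal_leI)
    next
      case False
      then show ?thesis using e by (auto simp: indicator_def)
    qed
  qed
  also have "\<dots> = ennreal ?C * emeasure lborel {0..e}"
    by (rule nn_integral_cmult_indicator) simp
  also have "\<dots> = ennreal ?C * ennreal e" using e by simp
  also have "\<dots> = ennreal (e * ?C)" using e C0 by (metis ennreal_mult mult.commute less_imp_le)
  finally have "ennreal (measure (beta_measure a b) {..<e}) \<le> ennreal (e * ?C)"
    by (simp add: emeasure_eq_measure)
  moreover have "0 \<le> e * ?C" using e C0 by (intro mult_nonneg_nonneg) auto
  ultimately show ?thesis using ennreal_le_iff by blast
qed

lemma marginal:
  assumes K: "K \<ge> 2" and th: "\<theta> > 0"
  shows "{v \<in> space (V_space K \<theta>). v 1 < e} \<in> sets (V_space K \<theta>)"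
    "measure (V_space K \<theta>) {v \<in> space (V_space K \<theta>). v 1 < e}
       = measure (beta_measure (\<theta> / real K + 1) (real (K - 1) * \<theta> / real K)) {..<e}"
proof -
  let ?M = "\<lambda>i. beta_measure (\<theta> / real K + 1) (real (K - i) * \<theta> / real K)"
  have P: "prob_space (?M i)" if "i \<in> {1..K-1}" for i
    using that K th by (intro beta_prob) (auto intro!: add_nonneg_pos)
  have i1: "(1::nat) \<in> {1..K-1}" using K by auto
  have meas: "(\<lambda>\<omega>. \<omega> 1) \<in> measurable (V_space K \<theta>) (?M 1)"
    unfolding V_space_def using i1 by (rule measurable_component_singleton)
  have sets: "{..<e} \<in> sets (?M 1)" by (simp add: beta_measure_def)
  have eq: "(\<lambda>\<omega>. \<omega> 1) -` {..<e} \<inter> space (V_space K \<theta>) = {v \<in> space (V_space K \<theta>). v 1 < e}"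
    by auto
  show "{v \<in> space (V_space K \<theta>). v 1 < e} \<in> sets (V_space K \<theta>)"
    using measurable_sets[OF meas sets] eq by simp
  have "measure (?M 1) {..<e} = measure (distr (V_space K \<theta>) (?M 1) (\<lambda>\<omega>. \<omega> 1)) {..<e}"
  proof -
    have "distr (PiM {1..K-1} ?M) (?M 1) (\<lambda>\<omega>. \<omega> 1) = ?M 1"
      by (rule distr_PiM_component) (use P i1 in auto)
    then show ?thesis unfolding V_space_def by simp
  qed
  also have "\<dots> = measure (V_space K \<theta>) {v \<in> space (V_space K \<theta>). v 1 < e}"
    by (subst measure_distr[OF meas sets], subst eq) (rule refl)
  finally show "measure (V_space K \<theta>) {v \<in> space (V_space K \<theta>). v 1 < e}
       = measure (beta_measure (\<theta> / real K + 1) (real (K - 1) * \<theta> / real K)) {..<e}" by simp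
qed



lemma arith_bound:
  fixes k \<theta> e b B :: real
  assumes k: "k \<ge> 2" and th: "\<theta> \<ge> k" and e: "e = (1/16) powr (2*k)"
    and b: "b = (k - 1) * \<theta> / k"
    and B: "B \<ge> (1/4) * ((1/4) powr (\<theta>/k) * (1/2) powr (b - 1))"
  shows "e * (e powr (\<theta>/k) / B) \<le> (1/16) powr \<theta>"
proof -
  define l where "l = ln (2::real)"
  have l: "l > 0" unfolding l_def by simp
  have l16: "ln (1/16::real) = -4*l"
  proof -
    have "ln (1/16::real) = - ln (2^4)" by (simp add: ln_div)
    also have "\<dots> = -4*l" unfolding l_def by (subst ln_realpow) auto
    finally show ?thesis .
  qed
  have p16: "(1/16::real) powr x = exp (-4*l*x)" for x
    by (simp add: powr_def l16)
  have p4: "(1/4::real) powr x = exp (-2*l*x)" for x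
  proof -
    have "ln (1/4::real) = - ln (2^2)" by (simp add: ln_div)
    also have "\<dots> = -2*l" unfolding l_def by (subst ln_realpow) auto
    finally show ?thesis by (simp add: powr_def)
  qed
  have p2: "(1/2::real) powr x = exp (-l*x)" for x
    by (simp add: powr_def l_def ln_div)
  define D where "D = (1/4) * ((1/4) powr (\<theta>/k) * (1/2) powr (b - 1))"
  have D0: "D > 0" unfolding D_def by simp
  have bb: "b - 1 \<le> \<theta>" using k th unfolding b
    by (simp add: field_simps)
  have tk: "\<theta>/k \<le> \<theta>" using k th by (simp add: field_simps)
  have e0: "e > 0" using e by simp
  have ep: "e powr (\<theta>/k) = exp (-8*l*\<theta>)"
    using e k by (simp add: powr_def l16 field_simps)
  have "D \<ge> (1/4) * (exp (-2*l*\<theta>) * exp (-l*\<theta>))"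
  proof -
    have "2*l*(\<theta>/k) \<le> 2*l*\<theta>" using l tk by (intro mult_left_mono) auto
    moreover have "l*(b-1) \<le> l*\<theta>" using l bb by (intro mult_left_mono) auto
    ultimately show ?thesis unfolding D_def p4 p2 by (intro mult_left_mono mult_mono) auto
  qed
  then have D1: "D \<ge> exp (-3*l*\<theta> - 2*l)"
  proof -
    have e2: "exp (2*l) = 4" 
    proof -
      have "exp (real 2 * l) = exp l ^ 2" by (rule exp_of_nat_mult)
      then show ?thesis by (simp add: l_def)
    qed
    have "exp (-3*l*\<theta> - 2*l) = (1/4) * (exp (-2*l*\<theta>) * exp (-l*\<theta>))"
    proof -
      have "exp (-2*l*\<theta>) * exp (-l*\<theta>) = exp (-2*l*\<theta> + -l*\<theta>)" by (rule exp_add[symmetric])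
      also have "-2*l*\<theta> + -l*\<theta> = -3*l*\<theta>" by algebra
      finally have "exp (-2*l*\<theta>) * exp (-l*\<theta>) = exp (-3*l*\<theta>)" .
      moreover have "exp (-3*l*\<theta> - 2*l) = exp (-3*l*\<theta>) / 4" by (simp only: exp_diff e2)
      ultimately show ?thesis by simp
    qed
    then show ?thesis using \<open>D \<ge> _\<close> by simp
  qed
  have "e * (e powr (\<theta>/k) / B) \<le> e * (e powr (\<theta>/k) / D)"
    using B D0 e0 unfolding D_def[symmetric]
    by (intro mult_left_mono divide_left_mono) auto
  also have "\<dots> = exp (-8*l*k) * exp (-8*l*\<theta>) / D"
    unfolding ep by (simp add: e p16)
  also have "\<dots> \<le> exp (-8*l*k) * exp (-8*l*\<theta>) / exp (-3*l*\<theta> - 2*l)"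
    using D1 D0 by (intro divide_left_mono) auto
  also have "\<dots> = exp (-8*l*k + -8*l*\<theta> - (-3*l*\<theta> - 2*l))"
    by (simp only: exp_add exp_diff)
  also have "\<dots> \<le> exp (-4*l*\<theta>)"
  proof (subst exp_le_cancel_iff)
    have "l*\<theta> \<ge> 0" "l*k \<ge> 2*l" using l k th by auto
    then show "-8*l*k + -8*l*\<theta> - (-3*l*\<theta> - 2*l) \<le> -4*l*\<theta>"
    proof -
      have "-8*l*k = -8*(l*k)" "-8*l*\<theta> = -8*(l*\<theta>)" "-3*l*\<theta> = -3*(l*\<theta>)" "-4*l*\<theta> = -4*(l*\<theta>)"
        by (simp_all only: mult.assoc)
      with l \<open>l*\<theta> \<ge> 0\<close> \<open>l*k \<ge> 2*l\<close> show ?thesis by linarith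
    qed
  qed
  also have "\<dots> = (1/16) powr \<theta>" by (simp add: p16)
  finally show ?thesis .
qed


lemma eln_bound:
  assumes th: "\<theta> > 0" and p: "p \<le> (1/16) powr \<theta>"
  shows "eln p / ereal \<theta> \<le> ereal (- ln 16)"
proof (cases "p \<le> 0")
  case True
  then show ?thesis using th by (simp add: eln_def)
next
  case False
  have "ln p \<le> ln ((1/16) powr \<theta>)" using False p by (subst ln_le_cancel_iff) auto
  also have "\<dots> = \<theta> * ln (1/16)" by (simp add: ln_powr)
  also have "\<dots> = - (\<theta> * ln 16)" by (simp add: ln_div)
  finally have "ln p / \<theta> \<le> - ln 16" using th by (simp add: divide_le_eq mult.commute)
  then show ?thesis using False th by (simp add: eln_def)
qed

lemma law_bound:
  assumes r: "r \<ge> 1" and K: "K > r" and th: "\<theta> \<ge> real K"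
    and e: "e = (1/16::real) powr (2 * real K)"
  shows "lawY r K \<theta> {y \<in> simplex_r r. y 0 < e} \<le> (1/16) powr \<theta>"
proof -
  have K2: "K \<ge> 2" using r K by simp
  have th0: "\<theta> > 0" using th K2 by simp
  have e0: "0 < e" using e by simp
  have e1: "e < 1"
  proof -
    have "(1/16::real) powr (2 * real K) < 1 powr (2 * real K)"
      by (rule powr_less_mono2) (use K2 in auto)
    then show ?thesis using e by simp
  qed
  let ?V = "V_space K \<theta>"
  let ?G = "{y \<in> simplex_r r. y 0 < e}"
  let ?A = "{v \<in> space ?V. stick_vec r v \<in> ?G}"
  let ?B = "{v \<in> space ?V. v 1 < e}"
  have sub: "?A \<subseteq> ?B"
  proof
    fix v assume "v \<in> ?A"
    moreover have "stick_vec r v 0 = v 1" using r by (simp add: stick_vec_def stick_def)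
    ultimately show "v \<in> ?B" by auto
  qed
  have Bset: "?B \<in> sets ?V" using marginal(1)[OF K2 th0] .
  interpret V: prob_space ?V unfolding V_space_def
    by (rule prob_space_PiM, rule beta_prob) (use th0 K2 in \<open>auto intro!: add_nonneg_pos\<close>)
  have "lawY r K \<theta> ?G \<le> measure ?V ?B"
  proof (cases "?A \<in> sets ?V")
    case True
    show ?thesis using V.finite_measure_mono[OF sub Bset] unfolding lawY_def by simp
  next
    case False
    then show ?thesis unfolding lawY_def by (simp add: measure_notin_sets)
  qed
  also have "\<dots> = measure (beta_measure (\<theta> / real K + 1) (real (K - 1) * \<theta> / real K)) {..<e}"
    using marginal(2)[OF K2 th0] .
  also have "\<dots> \<le> e * (e powr (\<theta> / real K + 1 - 1) / Beta (\<theta> / real K + 1) (real (K - 1) * \<theta> / real K))"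
  proof (rule beta_tail)
    show "1 \<le> \<theta> / real K + 1" using th0 by simp
    have t1: "\<theta> / real K \<ge> 1" using th K2 by simp
    have "real (K - 1) * (\<theta> / real K) \<ge> real (K - 1) * 1"
      by (rule mult_left_mono[OF t1]) simp
    then have "real (K - 1) * \<theta> / real K \<ge> real (K - 1) * 1" by simp
    then show "1 \<le> real (K - 1) * \<theta> / real K" using K2 by linarith
  qed (use e0 e1 in auto)
  also have "\<dots> = e * (e powr (\<theta> / real K) / Beta (\<theta> / real K + 1) ((real K - 1) * \<theta> / real K))"
    using K2 by (simp add: of_nat_diff)
  also have "\<dots> \<le> (1/16) powr \<theta>"
  proof (rule arith_bound[where b = "(real K - 1) * \<theta> / real K"])
    show "2 \<le> real K" using K2 by simp
    show "(1/4) * ((1/4) powr (\<theta> / real K) * (1/2) powr ((real K - 1) * \<theta> / real K - 1))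
        \<le> Beta (\<theta> / real K + 1) ((real K - 1) * \<theta> / real K)"
    proof -
      have b1: "1 \<le> (real K - 1) * \<theta> / real K"
      proof -
        have t1: "\<theta> / real K \<ge> 1" using th K2 by simp
        have "(real K - 1) * (\<theta> / real K) \<ge> (real K - 1) * 1"
          by (rule mult_left_mono[OF t1]) (use K2 in simp)
        then have "(real K - 1) * \<theta> / real K \<ge> (real K - 1) * 1" by simp
        moreover have "real K \<ge> 2" using K2 by simp
        ultimately show ?thesis by (smt (verit))
      qed
      have "Beta (\<theta> / real K + 1) ((real K - 1) * \<theta> / real K) \<ge>
          (1/4) * ((1/4) powr (\<theta> / real K + 1 - 1) * (1/2) powr ((real K - 1) * \<theta> / real K - 1))"
        by (rule Beta_lower) (use th0 b1 in auto)
      then show ?thesis by simp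
    qed
  qed (use th e in auto)
  finally show ?thesis .
qed

theorem theorem2p5:
  fixes r :: nat and J :: "nat \<Rightarrow> (nat \<Rightarrow> real) \<Rightarrow> ereal"
  assumes "r \<ge> 1"
    and "\<And>K. K > r \<Longrightarrow> LDP (lawY r K) (simplex_r r) (J K)"
  shows "\<exists>x\<in>simplex_r r. \<not> ((\<lambda>K. J K x) \<longlonglongrightarrow> S_rate r x)"
proof -
  let ?z = "(\<lambda>_. 0) :: nat \<Rightarrow> real"
  have z: "?z \<in> simplex_r r" by (simp add: simplex_r_def)
  have Jb: "ereal (ln 16) \<le> J K ?z" if K: "K > r" for K
  proof -
    define e where "e = (1/16::real) powr (2 * real K)"
    define G where "G = {y \<in> simplex_r r. y 0 < e}"
    have e0: "0 < e" using e_def by simp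
    have zG: "?z \<in> G" using z e0 by (simp add: G_def)
    have openG: "openin (top_of_set (simplex_r r)) G"
    proof -
      have "open ((\<lambda>y::nat\<Rightarrow>real. y 0) -` {..<e})"
        by (rule open_vimage) auto
      moreover have "G = simplex_r r \<inter> ((\<lambda>y::nat\<Rightarrow>real. y 0) -` {..<e})"
        by (auto simp: G_def)
      ultimately show ?thesis by (auto simp: openin_open)
    qed
    have ldp: "- (INF x\<in>G. J K x) \<le> Liminf at_top (\<lambda>\<theta>. eln (lawY r K \<theta> G) / ereal \<theta>)"
      using assms(2)[OF K] openG unfolding LDP_def by blast
    have bound: "eventually (\<lambda>\<theta>. eln (lawY r K \<theta> G) / ereal \<theta> \<le> ereal (- ln 16)) at_top"
    proof (rule eventually_at_top_linorderI[of "real K"])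
      fix \<theta> :: real assume th: "\<theta> \<ge> real K"
      have "\<theta> > 0" using th K assms(1) by simp
      then show "eln (lawY r K \<theta> G) / ereal \<theta> \<le> ereal (- ln 16)"
        using eln_bound law_bound[OF assms(1) K th e_def] unfolding G_def by blast
    qed
    have li: "Liminf at_top (\<lambda>\<theta>. eln (lawY r K \<theta> G) / ereal \<theta>) \<le> ereal (- ln 16)"
      by (rule order_trans[OF Liminf_le_Limsup Limsup_bounded[OF bound]]) simp
    have a: "- J K ?z \<le> - (INF x\<in>G. J K x)"
      using INF_lower[OF zG, of "J K"] by (simp only: ereal_minus_le_minus)
    have "- J K ?z \<le> ereal (- ln 16)" using order_trans[OF a order_trans[OF ldp li]] .
    then show ?thesis by (metis ereal_minus_le_minus uminus_ereal.simps(1))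
  qed
  show ?thesis
  proof (intro bexI[OF _ z] notI)
    assume lim: "(\<lambda>K. J K ?z) \<longlonglongrightarrow> S_rate r ?z"
    have "S_rate r ?z = 0" by (simp add: S_rate_def zero_ereal_def)
    moreover have "ereal (ln 16) \<le> S_rate r ?z"
    proof (rule tendsto_lowerbound[OF lim])
      show "\<forall>\<^sub>F K in sequentially. ereal (ln 16) \<le> J K ?z"
        by (rule eventually_sequentiallyI[of "Suc r"]) (use Jb in auto)
    qed simp
    ultimately show False by simp
  qed
qed

end
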